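(* Let $A$ be an $n\times n$ matrix over $\mathbb{C}$ (or $\mathbb{R}$) with $A^3\neq 0$. Then $A^2\otimes A=A\otimes A^2$ if and only if $A^2\otimes A^3\otimes A=A\otimes A^3\otimes A^2$.
   Context: Here $\otimes$ denotes the Kronecker product of matrices: for $A=[a_{ij}]$, $A\otimes B$ is the block matrix whose $(i,j)$ block is $a_{ij}B$. *)

theory Defs
  imports "Jordan_Normal_Form.Matrix"
begin

definition kron :: "'a::times mat \<Rightarrow> 'a mat \<Rightarrow> 'a mat" where
  "kron A B = mat (dim_row A * dim_row B) (dim_col A * dim_col B)
     (\<lambda>(i, j). A $$ (i div dim_row B, j div dim_col B) * B $$ (i mod dim_row B, j mod dim_col B))"

end

theory Submission
  imports Defs
begin

lemma kron_dims:
  assumes "X \<in> carrier_mat m m" "Y \<in> carrier_mat n n"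
  shows "kron X Y \<in> carrier_mat (m*n) (m*n)"
  using assms unfolding kron_def by auto

lemma lt_aux: "(a::nat) < m \<Longrightarrow> c < n \<Longrightarrow> a*n + c < m*n"
proof -
  assume "a < m" "c < n"
  then have "a*n + c < a*n + n" by simp
  also have "\<dots> = (a+1)*n" by simp
  also have "\<dots> \<le> m*n" using \<open>a<m\<close> by (intro mult_right_mono) auto
  finally show ?thesis .
qed

lemma kron_idx:
  assumes "X \<in> carrier_mat m m" "Y \<in> carrier_mat n n" "a<m" "b<m" "c<n" "d<n"
  shows "kron X Y $$ (a*n+c, b*n+d) = X$$(a,b)*Y$$(c,d)"
proof -
  have n: "n > 0" using assms by auto
  show ?thesis using assms lt_aux[OF assms(3,5)] lt_aux[OF assms(4,6)] n
    unfolding kron_def by (simp add: index_mat)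
qed

lemma kron_eq_iff:
  assumes "X \<in> carrier_mat m m" "Y \<in> carrier_mat n n"
     "X' \<in> carrier_mat m m" "Y' \<in> carrier_mat n n"
  shows "kron X Y = kron X' Y' \<longleftrightarrow>
    (\<forall>a<m. \<forall>b<m. \<forall>c<n. \<forall>d<n. X$$(a,b)*Y$$(c,d) = X'$$(a,b)*Y'$$(c,d))"
proof
  assume "kron X Y = kron X' Y'"
  then show "\<forall>a<m. \<forall>b<m. \<forall>c<n. \<forall>d<n. X$$(a,b)*Y$$(c,d) = X'$$(a,b)*Y'$$(c,d)"
    using kron_idx[OF assms(1,2)] kron_idx[OF assms(3,4)] by metis
next
  assume H: "\<forall>a<m. \<forall>b<m. \<forall>c<n. \<forall>d<n. X$$(a,b)*Y$$(c,d) = X'$$(a,b)*Y'$$(c,d)"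
  show "kron X Y = kron X' Y'"
  proof (rule eq_matI)
    show "dim_row (kron X Y) = dim_row (kron X' Y')" "dim_col (kron X Y) = dim_col (kron X' Y')"
      using kron_dims[OF assms(1,2)] kron_dims[OF assms(3,4)] by auto
    fix i j assume i: "i < dim_row (kron X' Y')" and j: "j < dim_col (kron X' Y')"
    then have i': "i < m*n" and j': "j < m*n" using kron_dims[OF assms(3,4)] by auto
    then have n: "n > 0" by (cases n) auto
    have ia: "i div n < m" using i' by (simp add: less_mult_imp_div_less)
    have ja: "j div n < m" using j' by (simp add: less_mult_imp_div_less)
    have ic: "i mod n < n" "j mod n < n" using n by auto
    have ei: "i = (i div n)*n + i mod n" "j = (j div n)*n + j mod n" by simp_all
    show "kron X Y $$ (i, j) = kron X' Y' $$ (i, j)"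
      apply (subst (1 2) ei(1), subst (1 2) ei(2))
      using kron_idx[OF assms(1,2) ia ja ic] kron_idx[OF assms(3,4) ia ja ic] H ia ja ic
      by simp
  qed
qed

lemma kron3_eq_iff:
  assumes "X \<in> carrier_mat n n" "Y \<in> carrier_mat n n" "Z \<in> carrier_mat n n"
     "X' \<in> carrier_mat n n" "Y' \<in> carrier_mat n n" "Z' \<in> carrier_mat n n"
  shows "kron (kron X Y) Z = kron (kron X' Y') Z' \<longleftrightarrow>
    (\<forall>a<n. \<forall>b<n. \<forall>c<n. \<forall>d<n. \<forall>e<n. \<forall>f<n.
       X$$(a,b)*Y$$(c,d)*Z$$(e,f) = X'$$(a,b)*Y'$$(c,d)*Z'$$(e,f))"
proof -
  have "kron (kron X Y) Z = kron (kron X' Y') Z' \<longleftrightarrow>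
    (\<forall>a<n*n. \<forall>b<n*n. \<forall>e<n. \<forall>f<n. kron X Y$$(a,b)*Z$$(e,f) = kron X' Y'$$(a,b)*Z'$$(e,f))"
    by (rule kron_eq_iff[OF kron_dims[OF assms(1,2)] assms(3) kron_dims[OF assms(4,5)] assms(6)])
  also have "\<dots> \<longleftrightarrow> (\<forall>a<n. \<forall>b<n. \<forall>c<n. \<forall>d<n. \<forall>e<n. \<forall>f<n.
       X$$(a,b)*Y$$(c,d)*Z$$(e,f) = X'$$(a,b)*Y'$$(c,d)*Z'$$(e,f))" (is "?L \<longleftrightarrow> ?R")
  proof
    assume L: ?L
    show ?R
    proof (intro allI impI)
      fix a b c d e f assume *: "a<n" "b<n" "c<n" "d<n" "e<n" "f<n"
      have "kron X Y$$(a*n+c,b*n+d)*Z$$(e,f) = kron X' Y'$$(a*n+c,b*n+d)*Z'$$(e,f)"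
        using L lt_aux[OF *(1,3)] lt_aux[OF *(2,4)] *(5,6) by blast
      then show "X$$(a,b)*Y$$(c,d)*Z$$(e,f) = X'$$(a,b)*Y'$$(c,d)*Z'$$(e,f)"
        using kron_idx[OF assms(1,2) *(1-4)] kron_idx[OF assms(4,5) *(1-4)] by simp
    qed
  next
    assume R: ?R
    show ?L
    proof (intro allI impI)
      fix i j e f assume i': "i < n*n" and j': "j < n*n" and ef: "e<n" "f<n"
      then have n: "n > 0" by (cases n) auto
      have ia: "i div n < n" using i' by (simp add: less_mult_imp_div_less)
      have ja: "j div n < n" using j' by (simp add: less_mult_imp_div_less)
      have ic: "i mod n < n" "j mod n < n" using n by auto
      have ei: "i = (i div n)*n + i mod n" "j = (j div n)*n + j mod n" by simp_all
      show "kron X Y$$(i,j)*Z$$(e,f) = kron X' Y'$$(i,j)*Z'$$(e,f)"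
        apply (subst (1 2) ei(1), subst (1 2) ei(2))
        using kron_idx[OF assms(1,2) ia ja ic] kron_idx[OF assms(4,5) ia ja ic] R ia ja ic ef
        by simp
    qed
  qed
  finally show ?thesis .
qed

theorem lemma2p5:
  fixes A :: "complex mat"
  assumes "A \<in> carrier_mat n n"
    and "A ^\<^sub>m 3 \<noteq> 0\<^sub>m n n"
  shows "kron (A ^\<^sub>m 2) A = kron A (A ^\<^sub>m 2) \<longleftrightarrow>
         kron (kron (A ^\<^sub>m 2) (A ^\<^sub>m 3)) A = kron (kron A (A ^\<^sub>m 3)) (A ^\<^sub>m 2)"
proof -
  have A2: "A ^\<^sub>m 2 \<in> carrier_mat n n" and A3: "A ^\<^sub>m 3 \<in> carrier_mat n n"
    using assms(1) by auto
  obtain c d where cd: "c < n" "d < n" "(A ^\<^sub>m 3) $$ (c,d) \<noteq> 0"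
  proof -
    have "\<not> (\<forall>c<n. \<forall>d<n. (A ^\<^sub>m 3) $$ (c,d) = 0)"
    proof
      assume "\<forall>c<n. \<forall>d<n. (A ^\<^sub>m 3) $$ (c,d) = 0"
      then have "A ^\<^sub>m 3 = 0\<^sub>m n n" using A3 by (intro eq_matI) auto
      with assms(2) show False by simp
    qed
    then show ?thesis using that by blast
  qed
  show ?thesis
    unfolding kron_eq_iff[OF A2 assms(1) assms(1) A2]
      kron3_eq_iff[OF A2 A3 assms(1) assms(1) A3 A2]
  proof
    assume H: "\<forall>a<n. \<forall>b<n. \<forall>c<n. \<forall>d<n.
      (A ^\<^sub>m 2) $$ (a, b) * A $$ (c, d) = A $$ (a, b) * (A ^\<^sub>m 2) $$ (c, d)"
    show "\<forall>a<n. \<forall>b<n. \<forall>c<n. \<forall>d<n. \<forall>e<n. \<forall>f<n.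
       (A ^\<^sub>m 2) $$ (a, b) * (A ^\<^sub>m 3) $$ (c, d) * A $$ (e, f) =
       A $$ (a, b) * (A ^\<^sub>m 3) $$ (c, d) * (A ^\<^sub>m 2) $$ (e, f)"
    proof (intro allI impI)
      fix a b c d e f :: nat assume *: "a<n" "b<n" "c<n" "d<n" "e<n" "f<n"
      have "(A ^\<^sub>m 2) $$ (a, b) * A $$ (e, f) = A $$ (a, b) * (A ^\<^sub>m 2) $$ (e, f)"
        using H * by blast
      then show "(A ^\<^sub>m 2) $$ (a, b) * (A ^\<^sub>m 3) $$ (c, d) * A $$ (e, f) =
       A $$ (a, b) * (A ^\<^sub>m 3) $$ (c, d) * (A ^\<^sub>m 2) $$ (e, f)"
        by (metis mult.commute mult.left_commute)
    qed
  next
    assume H: "\<forall>a<n. \<forall>b<n. \<forall>c<n. \<forall>d<n. \<forall>e<n. \<forall>f<n.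
       (A ^\<^sub>m 2) $$ (a, b) * (A ^\<^sub>m 3) $$ (c, d) * A $$ (e, f) =
       A $$ (a, b) * (A ^\<^sub>m 3) $$ (c, d) * (A ^\<^sub>m 2) $$ (e, f)"
    show "\<forall>a<n. \<forall>b<n. \<forall>c<n. \<forall>d<n.
      (A ^\<^sub>m 2) $$ (a, b) * A $$ (c, d) = A $$ (a, b) * (A ^\<^sub>m 2) $$ (c, d)"
    proof (intro allI impI)
      fix a b e f :: nat assume *: "a<n" "b<n" "e<n" "f<n"
      have "(A ^\<^sub>m 2) $$ (a, b) * (A ^\<^sub>m 3) $$ (c, d) * A $$ (e, f) =
       A $$ (a, b) * (A ^\<^sub>m 3) $$ (c, d) * (A ^\<^sub>m 2) $$ (e, f)"
        using H * cd by blast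
      then have "(A ^\<^sub>m 3) $$ (c, d) * ((A ^\<^sub>m 2) $$ (a, b) * A $$ (e, f)) =
        (A ^\<^sub>m 3) $$ (c, d) * (A $$ (a, b) * (A ^\<^sub>m 2) $$ (e, f))"
        by (simp add: ac_simps)
      then show "(A ^\<^sub>m 2) $$ (a, b) * A $$ (e, f) = A $$ (a, b) * (A ^\<^sub>m 2) $$ (e, f)"
        using cd(3) by simp
    qed
  qed
qed

end
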